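(* Let $k\ge2$ and $m\ge1$ be integers and consider any realization of the random $k$-tree $G(m)$. For an edge $e$ of $G(m)$ let $N(e)$ be the number of $k$-cliques of $G(m)$ containing $e$. Let $F$ be the spanning forest of $G(m)$ defined as follows: for each $1\le t\le m$, if the vertex $x$ born in round $t$ was joined to the $k$-clique $C$, then in $F$ the vertex $x$ is joined to a vertex $u\in V(C)$ with $N(xu)=\max_{v\in V(C)}N(xv)$ (ties broken arbitrarily). If $xy\in E(F)$, $x$ is born later than $y$, and the degree of $x$ in $G(m)$ is greater than $2k-2$, then $N(xy)\ge (k^2-k)/2$.
   Context: Random $k$-tree process: $G(0)$ is a clique on $k$ vertices (born in round $0$); for $t\ge1$, $G(t)$ is obtained from $G(t-1)$ by choosing a $k$-clique of $G(t-1)$ uniformly at random, creating a new vertex (born in round $t$), and joining it to all vertices of the chosen clique. *)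

theory Defs
  imports Complex_Main
begin

text \<open>The initial clique has vertices 0..k-1 (born in round 0);
the vertex born in round t (t \<ge> 1) is k + t - 1. C t is the k-clique chosen in round t.\<close>

fun ktree_edges :: "nat \<Rightarrow> (nat \<Rightarrow> nat set) \<Rightarrow> nat \<Rightarrow> nat set set" where
  "ktree_edges k C 0 = {{a, b} | a b. a < k \<and> b < k \<and> a \<noteq> b}"
| "ktree_edges k C (Suc t) = ktree_edges k C t \<union> {{k + t, v} | v. v \<in> C (Suc t)}"

definition ktree_vertices :: "nat \<Rightarrow> nat \<Rightarrow> nat set" where
  "ktree_vertices k t = {..<k + t}"

definition is_kclique :: "nat \<Rightarrow> nat set \<Rightarrow> nat set set \<Rightarrow> nat set \<Rightarrow> bool" where
  "is_kclique k V E S \<longleftrightarrow> S \<subseteq> V \<and> card S = k \<and> (\<forall>a\<in>S. \<forall>b\<in>S. a \<noteq> b \<longrightarrow> {a, b} \<in> E)"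

definition ktree_realization :: "nat \<Rightarrow> nat \<Rightarrow> (nat \<Rightarrow> nat set) \<Rightarrow> bool" where
  "ktree_realization k m C \<longleftrightarrow>
     (\<forall>t\<in>{1..m}. is_kclique k (ktree_vertices k (t - 1)) (ktree_edges k C (t - 1)) (C t))"

definition Ncl :: "nat \<Rightarrow> (nat \<Rightarrow> nat set) \<Rightarrow> nat \<Rightarrow> nat set \<Rightarrow> nat" where
  "Ncl k C m e = card {S. is_kclique k (ktree_vertices k m) (ktree_edges k C m) S \<and> e \<subseteq> S}"

definition birth :: "nat \<Rightarrow> nat \<Rightarrow> nat" where
  "birth k x = (if x < k then 0 else x - k + 1)"

definition ktree_degree :: "nat \<Rightarrow> (nat \<Rightarrow> nat set) \<Rightarrow> nat \<Rightarrow> nat \<Rightarrow> nat" where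
  "ktree_degree k C m x = card {v. {x, v} \<in> ktree_edges k C m}"

text \<open>p t is the vertex of C t to which the vertex born in round t is joined in F
(a maximiser of N, ties broken arbitrarily).\<close>
definition forest_parent_ok :: "nat \<Rightarrow> nat \<Rightarrow> (nat \<Rightarrow> nat set) \<Rightarrow> (nat \<Rightarrow> nat) \<Rightarrow> bool" where
  "forest_parent_ok k m C p \<longleftrightarrow>
     (\<forall>t\<in>{1..m}. p t \<in> C t \<and>
        Ncl k C m {k + t - 1, p t} = Max ((\<lambda>v. Ncl k C m {k + t - 1, v}) ` C t))"

definition forest_edges :: "nat \<Rightarrow> nat \<Rightarrow> (nat \<Rightarrow> nat) \<Rightarrow> nat set set" where
  "forest_edges k m p = {{k + t - 1, p t} | t. t \<in> {1..m}}"

end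

theory Submission
  imports Defs
begin


lemma edges_mono: "a \<le> b \<Longrightarrow> ktree_edges k C a \<subseteq> ktree_edges k C b"
  by (induction b) (auto simp: le_Suc_eq)

lemma edge_new: "1 \<le> s \<Longrightarrow> v \<in> C s \<Longrightarrow> {k+s-1, v} \<in> ktree_edges k C s"
proof -
  assume "1 \<le> s" "v \<in> C s"
  then obtain s' where "s = Suc s'" by (cases s) auto
  thus ?thesis using \<open>v \<in> C s\<close> by auto
qed

lemma edge_cases: "{x,v} \<in> ktree_edges k C n \<Longrightarrow> (x<k \<and> v<k) \<or>
   (\<exists>s\<in>{1..n}. (x = k+s-1 \<and> v \<in> C s) \<or> (v = k+s-1 \<and> x \<in> C s))"
proof (induction n)
  case 0
  then show ?case by (auto simp: doubleton_eq_iff)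
next
  case (Suc n)
  show ?case
  proof (cases "{x,v} \<in> ktree_edges k C n")
    case True
    have sub: "{1..n} \<subseteq> {1..Suc n}" by auto
    from Suc.IH[OF True] sub show ?thesis by blast
  next
    case False
    with Suc.prems obtain w where "{x,v} = {k+n, w}" "w \<in> C (Suc n)" by auto
    hence "(x = k + Suc n - 1 \<and> v \<in> C (Suc n)) \<or> (v = k + Suc n - 1 \<and> x \<in> C (Suc n))"
      by (auto simp: doubleton_eq_iff)
    moreover have "Suc n \<in> {1..Suc n}" by simp
    ultimately show ?thesis by blast
  qed
qed

lemma rank_sum:
  fixes S :: "nat set"
  assumes "finite S"
  shows "(\<Sum>s\<in>S. g (card {s'\<in>S. s' < s})) = (\<Sum>j<card S. g j)"
  using assms
proof (induction S rule: finite_linorder_max_induct)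
  case empty
  then show ?case by simp
next
  case (insert a S)
  have 1: "(\<Sum>s\<in>insert a S. g (card {s'\<in>insert a S. s' < s})) =
     g (card {s'\<in>insert a S. s' < a}) + (\<Sum>s\<in>S. g (card {s'\<in>insert a S. s' < s}))"
    by (rule sum.insert) (use insert in auto)
  have 2: "{s'\<in>insert a S. s' < a} = S" using insert by auto
  have 3: "\<And>s. s \<in> S \<Longrightarrow> {s'\<in>insert a S. s' < s} = {s'\<in>S. s' < s}" using insert by auto
  have "card (insert a S) = Suc (card S)" using insert by auto
  then show ?case using 1 2 3 insert by (simp add: lessThan_Suc add.commute)
qed

lemma gauss2: "2 * (\<Sum>j<n. (n::nat) - j) = n * (n+1)"
proof (induction n)
  case 0 then show ?case by simp
next
  case (Suc n)
  have "(\<Sum>j<Suc n. Suc n - j) = (\<Sum>j<n. n - j) + n + 1"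
  proof -
    have "(\<Sum>j<Suc n. Suc n - j) = (\<Sum>j<n. Suc n - j) + 1" by simp
    also have "(\<Sum>j<n. Suc n - j) = (\<Sum>j<n. (n - j) + 1)"
      by (rule sum.cong) auto
    also have "\<dots> = (\<Sum>j<n. n - j) + (\<Sum>j<n. 1)" by (rule sum.distrib)
    finally show ?thesis by simp
  qed
  then show ?case using Suc by simp
qed



theorem lemma5:
  fixes k m :: nat and C :: "nat \<Rightarrow> nat set" and p :: "nat \<Rightarrow> nat" and x y :: nat
  assumes "k \<ge> 2" and "m \<ge> 1"
    and "ktree_realization k m C"
    and "forest_parent_ok k m C p"
    and "{x, y} \<in> forest_edges k m p"
    and "birth k x > birth k y"
    and "ktree_degree k C m x > 2 * k - 2"
  shows "real (Ncl k C m {x, y}) \<ge> (real k ^ 2 - real k) / 2"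
proof -
  let ?E = "ktree_edges k C"
  have rl: "C s \<subseteq> {..<k+s-1} \<and> card (C s) = k \<and> (\<forall>a\<in>C s. \<forall>b\<in>C s. a\<noteq>b \<longrightarrow> {a,b} \<in> ?E (s-1))"
    if "s \<in> {1..m}" for s
  proof -
    have "k + (s - 1) = k + s - 1" using that by auto
    then show ?thesis using assms(3) that unfolding ktree_realization_def is_kclique_def ktree_vertices_def
      by metis
  qed
  have finC: "finite (C s)" if "s \<in> {1..m}" for s
    using rl[OF that] finite_subset by blast
  obtain t where t: "t\<in>{1..m}" "{x,y} = {k+t-1, p t}"
    using assms(5) unfolding forest_edges_def by auto
  have pt: "p t \<in> C t" and maxN: "Ncl k C m {k+t-1, p t} = Max ((\<lambda>v. Ncl k C m {k + t - 1, v}) ` C t)"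
    using assms(4) t(1) unfolding forest_parent_ok_def by auto
  have ptlt: "p t < k+t-1" using rl[OF t(1)] pt by auto
  have bx: "birth k (k+t-1) = t" using t(1) unfolding birth_def by auto
  have bp: "birth k (p t) < t" using ptlt t(1) unfolding birth_def by auto
  have xy: "x = k+t-1 \<and> y = p t"
    using t(2) assms(6) bx bp by (auto simp: doubleton_eq_iff)
  hence xdef: "x = k+t-1" and ydef: "y = p t" by auto
  have xnC: "x \<notin> C t" using rl[OF t(1)] xdef by auto
  define S where "S = {s\<in>{t<..m}. x \<in> C s}"
  have finS: "finite S" unfolding S_def by auto
  have Sm: "s \<in> {1..m}" if "s \<in> S" for s using that t(1) unfolding S_def by auto
  have nb: "{v. {x,v} \<in> ?E m} \<subseteq> C t \<union> (\<lambda>s. k+s-1) ` S"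
  proof
    fix v assume "v \<in> {v. {x,v} \<in> ?E m}"
    hence "{x,v} \<in> ?E m" by simp
    from edge_cases[OF this] have
      "(\<exists>s\<in>{1..m}. (x = k+s-1 \<and> v \<in> C s) \<or> (v = k+s-1 \<and> x \<in> C s))"
      using xdef t(1) by auto
    then obtain s where s: "s\<in>{1..m}" "(x = k+s-1 \<and> v \<in> C s) \<or> (v = k+s-1 \<and> x \<in> C s)" by blast
    show "v \<in> C t \<union> (\<lambda>s. k+s-1) ` S"
    proof (cases "x = k+s-1 \<and> v \<in> C s")
      case True
      then have "s = t" using xdef s(1) t(1) by auto
      then show ?thesis using True by auto
    next
      case False
      then have v: "v = k+s-1" "x \<in> C s" using s by auto
      have "x < k+s-1" using rl[OF s(1)] v by auto
      then have "s \<in> S" using xdef s(1) v unfolding S_def by auto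
      then show ?thesis using v by auto
    qed
  qed
  have "ktree_degree k C m x \<le> card (C t \<union> (\<lambda>s. k+s-1) ` S)"
    unfolding ktree_degree_def
    by (rule card_mono[OF _ nb]) (use finC[OF t(1)] finS in auto)
  also have "\<dots> \<le> card (C t) + card ((\<lambda>s. k+s-1) ` S)" by (rule card_Un_le)
  also have "\<dots> \<le> k + card S" using rl[OF t(1)] card_image_le[OF finS, of "\<lambda>s. k+s-1"] by auto
  finally have cardS: "k - 1 \<le> card S" using assms(7) assms(1) by linarith
  have child: "k - 1 - card {s'\<in>S. s' < s} \<le> card (C s \<inter> C t)" if sS: "s \<in> S" for s
  proof -
    have s1: "s \<in> {1..m}" using Sm[OF sS] .
    have xs: "x \<in> C s" using sS unfolding S_def by auto
    have ts: "t < s" using sS unfolding S_def by auto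
    have sub: "C s - {x} \<subseteq> (C s \<inter> C t) \<union> (\<lambda>s'. k+s'-1) ` {s'\<in>S. s' < s}"
    proof
      fix v assume v: "v \<in> C s - {x}"
      then have "{x,v} \<in> ?E (s-1)" using rl[OF s1] xs by auto
      from edge_cases[OF this] have
        "(\<exists>s'\<in>{1..s-1}. (x = k+s'-1 \<and> v \<in> C s') \<or> (v = k+s'-1 \<and> x \<in> C s'))"
        using xdef t(1) by auto
      then obtain s' where s': "s'\<in>{1..s-1}" "(x = k+s'-1 \<and> v \<in> C s') \<or> (v = k+s'-1 \<and> x \<in> C s')" by blast
      have s'm: "s' \<in> {1..m}" using s' s1 by auto
      show "v \<in> (C s \<inter> C t) \<union> (\<lambda>s'. k+s'-1) ` {s'\<in>S. s' < s}"
      proof (cases "x = k+s'-1 \<and> v \<in> C s'")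
        case True
        then have "s' = t" using xdef s'(1) t(1) by auto
        then show ?thesis using True v by auto
      next
        case False
        then have vv: "v = k+s'-1" "x \<in> C s'" using s' by auto
        have "x < k+s'-1" using rl[OF s'm] vv by auto
        then have "s' \<in> S" using xdef s'm vv unfolding S_def by auto
        moreover have "s' < s" using s' ts by auto
        ultimately show ?thesis using vv by auto
      qed
    qed
    have "k - 1 = card (C s - {x})" using rl[OF s1] xs finC[OF s1] by auto
    also have "\<dots> \<le> card ((C s \<inter> C t) \<union> (\<lambda>s'. k+s'-1) ` {s'\<in>S. s' < s})"
      by (rule card_mono[OF _ sub]) (use finC[OF s1] finS in auto)
    also have "\<dots> \<le> card (C s \<inter> C t) + card ((\<lambda>s'. k+s'-1) ` {s'\<in>S. s' < s})" by (rule card_Un_le)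
    also have "\<dots> \<le> card (C s \<inter> C t) + card {s'\<in>S. s' < s}"
      using card_image_le[of "{s'\<in>S. s' < s}" "\<lambda>s'. k+s'-1"] finS by auto
    finally show ?thesis by linarith
  qed
  have "(\<Sum>j<k-1. k - 1 - j) \<le> (\<Sum>j<card S. k - 1 - j)"
    by (rule sum_mono2) (use cardS in auto)
  also have "\<dots> = (\<Sum>s\<in>S. k - 1 - card {s'\<in>S. s' < s})"
    using rank_sum[OF finS, of "\<lambda>j. k - 1 - j"] by simp
  also have "\<dots> \<le> (\<Sum>s\<in>S. card (C s \<inter> C t))"
    by (rule sum_mono) (use child in auto)
  finally have sumT: "(\<Sum>j<k-1. k - 1 - j) \<le> (\<Sum>s\<in>S. card (C s \<inter> C t))" .
  have dc: "(\<Sum>u\<in>C t. card {s\<in>S. u \<in> C s}) = (\<Sum>s\<in>S. card (C s \<inter> C t))"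
  proof -
    have "(\<Sum>u\<in>C t. card {s\<in>S. u \<in> C s}) = (\<Sum>u\<in>C t. \<Sum>s\<in>S. if u \<in> C s then 1 else 0)"
      using finS by (simp add: sum.If_cases Int_def)
    also have "\<dots> = (\<Sum>s\<in>S. \<Sum>u\<in>C t. if u \<in> C s then 1 else 0)" by (rule sum.swap)
    also have "\<dots> = (\<Sum>s\<in>S. card (C s \<inter> C t))"
      using finC[OF t(1)] by (simp add: sum.If_cases Int_commute)
    finally show ?thesis .
  qed
  have cliqfin: "finite {S. is_kclique k (ktree_vertices k m) (?E m) S \<and> e \<subseteq> S}" for e
    by (rule finite_subset[of _ "Pow {..<k+m}"]) (auto simp: is_kclique_def ktree_vertices_def)
  have peru: "(k-1) + (k-2) * card {s\<in>S. u \<in> C s} \<le> Ncl k C m {x,u}" if uC: "u \<in> C t" for u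
  proof -
    define Su where "Su = {s\<in>S. u \<in> C s}"
    define I where "I = Sigma (insert t Su) (\<lambda>s. C s - {x,u})"
    define f where "f = (\<lambda>(s,w). insert (k+s-1) (C s - {w}))"
    have finSu: "finite Su" using finS unfolding Su_def by auto
    have tSu: "t \<notin> Su" unfolding Su_def S_def by auto
    have Sum: "s \<in> {1..m}" if "s \<in> insert t Su" for s using that Sm t(1) unfolding Su_def by auto
    have xu: "x \<noteq> u" using uC rl[OF t(1)] xdef by auto
    have c1: "card (C t - {x,u}) = k - 1"
    proof -
      have "C t - {x,u} = C t - {u}" using xnC by auto
      then show ?thesis using rl[OF t(1)] uC finC[OF t(1)] by auto
    qed
    have c2: "card (C s - {x,u}) = k - 2" if "s \<in> Su" for s
    proof -
      have s1: "s \<in> {1..m}" using Sum that by auto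
      have "x \<in> C s" "u \<in> C s" using that unfolding Su_def S_def by auto
      then have "card (C s - {x,u}) = card (C s) - card {x,u}"
        using finC[OF s1] by (intro card_Diff_subset) auto
      then show ?thesis using rl[OF s1] xu by auto
    qed
    have "card I = (\<Sum>s\<in>insert t Su. card (C s - {x,u}))"
      unfolding I_def by (rule card_SigmaI) (use finSu Sum finC in auto)
    also have "\<dots> = card (C t - {x,u}) + (\<Sum>s\<in>Su. card (C s - {x,u}))"
      using finSu tSu by simp
    also have "\<dots> = (k-1) + (k-2) * card Su" using c1 c2 by simp
    finally have cI: "card I = (k-1) + (k-2) * card Su" .
    have topmem: "k+s-1 \<in> f (s,w)" for s w unfolding f_def by auto
    have topmax: "z \<le> k+s-1" if "z \<in> f (s,w)" "s \<in> {1..m}" for z s w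
      using that rl[OF that(2)] unfolding f_def by auto
    have inj: "inj_on f I"
    proof (rule inj_onI)
      fix a b assume a: "a \<in> I" and b: "b \<in> I" and fe: "f a = f b"
      obtain s w where sw: "a = (s,w)" by (cases a)
      obtain s' w' where sw': "b = (s',w')" by (cases b)
      have s1: "s \<in> {1..m}" and w: "w \<in> C s" using a Sum unfolding sw I_def by auto
      have s1': "s' \<in> {1..m}" and w': "w' \<in> C s'" using b Sum unfolding sw' I_def by auto
      have "k+s-1 \<le> k+s'-1" using topmax[OF _ s1', of "k+s-1" w'] topmem[of s w] fe sw sw' by auto
      moreover have "k+s'-1 \<le> k+s-1" using topmax[OF _ s1, of "k+s'-1" w] topmem[of s' w'] fe sw sw' by auto
      ultimately have ss: "s' = s" using s1 s1' by auto
      have nt: "k+s-1 \<notin> C s" using rl[OF s1] by auto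
      have "insert (k+s-1) (C s - {w}) = insert (k+s-1) (C s - {w'})"
        using fe unfolding sw sw' ss f_def by simp
      then have "C s - {w} = C s - {w'}" using nt
        by (metis Diff_iff insert_Diff1 insert_absorb2 insert_iff insert_ident)
      then have "w = w'" using w w' ss by auto
      then show "a = b" using sw sw' ss by simp
    qed
    have img: "f ` I \<subseteq> {S. is_kclique k (ktree_vertices k m) (?E m) S \<and> {x,u} \<subseteq> S}"
    proof
      fix Z assume "Z \<in> f ` I"
      then obtain s w where sw: "(s,w) \<in> I" "Z = f (s,w)" by auto
      have sI: "s \<in> insert t Su" and w: "w \<in> C s" "w \<noteq> x" "w \<noteq> u" using sw(1) unfolding I_def by auto
      have s1: "s \<in> {1..m}" using Sum sI by auto
      note r = rl[OF s1]
      have Z: "Z = insert (k+s-1) (C s - {w})" using sw(2) unfolding f_def by simp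
      have nt: "k+s-1 \<notin> C s - {w}" using r by auto
      have "card Z = Suc (k - 1)" using Z nt finC[OF s1] r w by simp
      then have cZ: "card Z = k" using assms(1) by simp
      have subV: "Z \<subseteq> ktree_vertices k m" using Z r s1 unfolding ktree_vertices_def by auto
      have edges: "\<forall>a\<in>Z. \<forall>b\<in>Z. a \<noteq> b \<longrightarrow> {a,b} \<in> ?E m"
      proof (intro ballI impI)
        fix a b assume ab: "a \<in> Z" "b \<in> Z" "a \<noteq> b"
        have m1: "?E (s-1) \<subseteq> ?E m" by (rule edges_mono) (use s1 in auto)
        have m2: "?E s \<subseteq> ?E m" by (rule edges_mono) (use s1 in auto)
        show "{a,b} \<in> ?E m"
        proof (cases "a = k+s-1")
          case True
          then have "b \<in> C s" using ab Z by auto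
          then show ?thesis using edge_new[of s b C k] s1 m2 True by auto
        next
          case False
          note aF = False
          then have aC: "a \<in> C s" using ab Z by auto
          show ?thesis
          proof (cases "b = k+s-1")
            case True
            then have "{a,b} = {k+s-1, a}" by auto
            then show ?thesis using edge_new[of s a C k] s1 m2 aC by auto
          next
            case False
            then have "b \<in> C s" using ab Z by auto
            then show ?thesis using r aC ab m1 by auto
          qed
        qed
      qed
      have xuZ: "{x,u} \<subseteq> Z"
      proof (cases "s = t")
        case True
        then show ?thesis using Z xdef uC w by auto
      next
        case False
        then have "s \<in> Su" using sI by auto
        then have "x \<in> C s" "u \<in> C s" unfolding Su_def S_def by auto
        then show ?thesis using Z w by auto
      qed
      show "Z \<in> {S. is_kclique k (ktree_vertices k m) (?E m) S \<and> {x,u} \<subseteq> S}"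
        using cZ subV edges xuZ unfolding is_kclique_def by auto
    qed
    have "card I = card (f ` I)" using inj by (simp add: card_image)
    also have "\<dots> \<le> Ncl k C m {x,u}" unfolding Ncl_def
      by (rule card_mono[OF cliqfin img])
    finally show ?thesis using cI unfolding Su_def by simp
  qed
  let ?N = "Ncl k C m {x,y}"
  have Nge: "Ncl k C m {x,u} \<le> ?N" if "u \<in> C t" for u
    using maxN that finC[OF t(1)] xdef ydef by (auto intro: Max_ge)
  have "(\<Sum>u\<in>C t. (k-1) + (k-2) * card {s\<in>S. u \<in> C s}) \<le> (\<Sum>u\<in>C t. Ncl k C m {x,u})"
    by (rule sum_mono) (use peru in auto)
  also have "\<dots> \<le> (\<Sum>u\<in>C t. ?N)" by (rule sum_mono) (use Nge in auto)
  also have "\<dots> = k * ?N" using rl[OF t(1)] by simp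
  finally have A: "(\<Sum>u\<in>C t. (k-1) + (k-2) * card {s\<in>S. u \<in> C s}) \<le> k * ?N" .
  have "(\<Sum>u\<in>C t. (k-1) + (k-2) * card {s\<in>S. u \<in> C s}) = k*(k-1) + (k-2) * (\<Sum>s\<in>S. card (C s \<inter> C t))"
  proof -
    have "(\<Sum>u\<in>C t. (k-1) + (k-2) * card {s\<in>S. u \<in> C s}) = (\<Sum>u\<in>C t. k-1) + (k-2) * (\<Sum>u\<in>C t. card {s\<in>S. u \<in> C s})"
      by (simp add: sum.distrib sum_distrib_left)
    then show ?thesis using rl[OF t(1)] dc by simp
  qed
  note EQ = this
  have B: "k*(k-1) + (k-2) * (\<Sum>j<k-1. k - 1 - j) \<le> k * ?N"
  proof -
    have "(k-2) * (\<Sum>j<k-1. k - 1 - j) \<le> (k-2) * (\<Sum>s\<in>S. card (C s \<inter> C t))"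
      by (rule mult_le_mono2[OF sumT])
    then show ?thesis using A EQ by linarith
  qed
  define T where "T = (\<Sum>j<k-1. k - 1 - j)"
  have T2: "2 * T = (k-1) * k" using gauss2[of "k-1"] assms(1) unfolding T_def by simp
  have "k * (k * (k-1)) = 2*(k*(k-1)) + (k-2)*(2*T)" using T2 assms(1)
  proof -
    have "k = 2 + (k-2)" using assms(1) by simp
    then have "k * (k * (k-1)) = (2 + (k-2)) * (k*(k-1))" by simp
    also have "\<dots> = 2*(k*(k-1)) + (k-2)*(2*T)" using T2 by (simp add: algebra_simps)
    finally show ?thesis .
  qed
  also have "\<dots> \<le> k * (2 * ?N)" using B unfolding T_def by simp
  finally have "k * (k-1) \<le> 2 * ?N" using assms(1) by simp
  then have "real (k * (k-1)) \<le> real (2 * ?N)" by linarith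
  moreover have "real (k * (k-1)) = real k ^ 2 - real k" using assms(1)
    by (simp add: of_nat_diff power2_eq_square algebra_simps)
  ultimately show ?thesis by simp
qed

end
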